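(* Let $G$ be a domino-free bipartite graph with color classes $X,Y$ and no universal vertex, and let $\mathcal{L}(G)=(\mathcal{B}(G)\cup\{\bot,\top\},\preceq)$ be its Galois lattice, with meet $\wedge$ and join $\vee$. Then for any $B^1,B^2\in\mathcal{B}(G)$ that are incomparable under $\preceq$, $$B^1\wedge B^2\neq\bot\ \Rightarrow\ B^1\vee B^2=\top \qquad\text{and}\qquad B^1\vee B^2\neq\top\ \Rightarrow\ B^1\wedge B^2=\bot.$$
   Context: A domino is the graph obtained from the chordless cycle $C_6$ by adding a chord between two antipodal vertices; domino-free means no induced domino. A biclique is a vertex set inducing a complete bipartite subgraph, with shores $X(B)=B\cap X$, $Y(B)=B\cap Y$; $\mathcal{B}(G)$ is the set of inclusion-wise maximal bicliques, ordered by $B\preceq B'\iff X(B)\subseteq X(B')$ (equivalently $Y(B)\supseteq Y(B')$). $\mathcal{L}(G)$ adds a bottom $\bot$ with $X(\bot)=\emptyset$, $Y(\bot)=Y$ and a top $\top$ with $X(\top)=X$, $Y(\top)=\emptyset$; this poset is a lattice. A universal vertex is adjacent to all vertices of the opposite color class. *)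

theory Defs
  imports Main
begin

definition bipartite_graph :: "'a set \<Rightarrow> 'a set \<Rightarrow> ('a \<Rightarrow> 'a \<Rightarrow> bool) \<Rightarrow> bool" where
  "bipartite_graph X Y E \<longleftrightarrow> finite X \<and> finite Y \<and> X \<inter> Y = {} \<and>
     (\<forall>u v. E u v \<longrightarrow> E v u) \<and>
     (\<forall>u v. E u v \<longrightarrow> (u \<in> X \<and> v \<in> Y) \<or> (u \<in> Y \<and> v \<in> X))"

text \<open>Edges of the domino on vertices 0..5: the 6-cycle 0-1-2-3-4-5-0 plus the
chord between the antipodal vertices 0 and 3.\<close>

definition domino_edges :: "nat set set" where
  "domino_edges = {{0,1},{1,2},{2,3},{3,4},{4,5},{5,0},{0,3}}"

definition has_induced_domino :: "'a set \<Rightarrow> ('a \<Rightarrow> 'a \<Rightarrow> bool) \<Rightarrow> bool" where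
  "has_induced_domino V E \<longleftrightarrow> (\<exists>vs :: 'a list. length vs = 6 \<and> distinct vs \<and> set vs \<subseteq> V \<and>
     (\<forall>i<6. \<forall>j<6. i \<noteq> j \<longrightarrow> (E (vs ! i) (vs ! j) \<longleftrightarrow> {i, j} \<in> domino_edges)))"

definition domino_free :: "'a set \<Rightarrow> 'a set \<Rightarrow> ('a \<Rightarrow> 'a \<Rightarrow> bool) \<Rightarrow> bool" where
  "domino_free X Y E \<longleftrightarrow> \<not> has_induced_domino (X \<union> Y) E"

definition universal_vertex :: "'a set \<Rightarrow> 'a set \<Rightarrow> ('a \<Rightarrow> 'a \<Rightarrow> bool) \<Rightarrow> 'a \<Rightarrow> bool" where
  "universal_vertex X Y E v \<longleftrightarrow>
     (v \<in> X \<and> (\<forall>y\<in>Y. E v y)) \<or> (v \<in> Y \<and> (\<forall>x\<in>X. E x v))"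

text \<open>A biclique: a vertex set inducing a complete bipartite subgraph K_{p,q}
with p, q \<ge> 1 (both shores nonempty; the degenerate ones are the added
bottom and top of the Galois lattice).\<close>

definition biclique :: "'a set \<Rightarrow> 'a set \<Rightarrow> ('a \<Rightarrow> 'a \<Rightarrow> bool) \<Rightarrow> 'a set \<Rightarrow> bool" where
  "biclique X Y E B \<longleftrightarrow> B \<subseteq> X \<union> Y \<and> B \<inter> X \<noteq> {} \<and> B \<inter> Y \<noteq> {} \<and>
     (\<forall>x\<in>B \<inter> X. \<forall>y\<in>B \<inter> Y. E x y)"

definition max_bicliques :: "'a set \<Rightarrow> 'a set \<Rightarrow> ('a \<Rightarrow> 'a \<Rightarrow> bool) \<Rightarrow> 'a set set" where
  "max_bicliques X Y E = {B. biclique X Y E B \<and>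
     (\<forall>B'. biclique X Y E B' \<and> B \<subseteq> B' \<longrightarrow> B' = B)}"

text \<open>Galois lattice: elements are the maximal bicliques plus bottom (the vertex
set Y, i.e. X-shore empty, Y-shore Y) and top (the vertex set X).\<close>

definition gbot :: "'a set \<Rightarrow> 'a set \<Rightarrow> 'a set" where "gbot X Y = Y"
definition gtop :: "'a set \<Rightarrow> 'a set \<Rightarrow> 'a set" where "gtop X Y = X"

definition galois_lattice :: "'a set \<Rightarrow> 'a set \<Rightarrow> ('a \<Rightarrow> 'a \<Rightarrow> bool) \<Rightarrow> 'a set set" where
  "galois_lattice X Y E = max_bicliques X Y E \<union> {gbot X Y, gtop X Y}"

definition gle :: "'a set \<Rightarrow> 'a set \<Rightarrow> 'a set \<Rightarrow> bool" where
  "gle X B B' \<longleftrightarrow> B \<inter> X \<subseteq> B' \<inter> X"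

definition is_meet :: "'a set \<Rightarrow> 'a set \<Rightarrow> ('a \<Rightarrow> 'a \<Rightarrow> bool) \<Rightarrow> 'a set \<Rightarrow> 'a set \<Rightarrow> 'a set \<Rightarrow> bool" where
  "is_meet X Y E M B1 B2 \<longleftrightarrow> M \<in> galois_lattice X Y E \<and> gle X M B1 \<and> gle X M B2 \<and>
     (\<forall>C \<in> galois_lattice X Y E. gle X C B1 \<and> gle X C B2 \<longrightarrow> gle X C M)"

definition is_join :: "'a set \<Rightarrow> 'a set \<Rightarrow> ('a \<Rightarrow> 'a \<Rightarrow> bool) \<Rightarrow> 'a set \<Rightarrow> 'a set \<Rightarrow> 'a set \<Rightarrow> bool" where
  "is_join X Y E J B1 B2 \<longleftrightarrow> J \<in> galois_lattice X Y E \<and> gle X B1 J \<and> gle X B2 J \<and>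
     (\<forall>C \<in> galois_lattice X Y E. gle X B1 C \<and> gle X B2 C \<longrightarrow> gle X J C)"

end

theory Submission
  imports Defs
begin

lemma all6: "(\<forall>i<(6::nat). P i) = (P 0 \<and> P 1 \<and> P 2 \<and> P 3 \<and> P 4 \<and> P 5)"
proof -
  have "i < 6 \<longleftrightarrow> i = 0 \<or> i = 1 \<or> i = 2 \<or> i = 3 \<or> i = 4 \<or> i = (5::nat)" for i by auto
  then show ?thesis by auto
qed
lemma de: "{i,j} \<in> domino_edges \<longleftrightarrow> (i,j) \<in> {(0,1),(1,0),(1,2),(2,1),(2,3),(3,2),(3,4),(4,3),(4,5),(5,4),(5,0),(0,5),(0,3),(3,0)}"
  unfolding domino_edges_def by (auto simp: doubleton_eq_iff)
lemma dom_check: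
  assumes "E x y1" "E x1 y1" "E x1 y" "E x y" "E x2 y" "E x2 y2" "E x y2"
   "E y1 x" "E y1 x1" "E y x1" "E y x" "E y x2" "E y2 x2" "E y2 x"
   "\<not> E y1 x2" "\<not> E y2 x1" "\<not> E x2 y1" "\<not> E x1 y2"
   "\<not> E x x1" "\<not> E x x2" "\<not> E x1 x" "\<not> E x1 x2" "\<not> E x2 x" "\<not> E x2 x1"
   "\<not> E y y1" "\<not> E y y2" "\<not> E y1 y" "\<not> E y1 y2" "\<not> E y2 y" "\<not> E y2 y1"
  shows "\<forall>i<6. \<forall>j<6. i \<noteq> j \<longrightarrow> (E ([x, y1, x1, y, x2, y2] ! i) ([x, y1, x1, y, x2, y2] ! j) \<longleftrightarrow> {i, j} \<in> domino_edges)"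
  unfolding all6 de using assms by simp
lemma ext_X:
  assumes bg: "bipartite_graph X Y E" and B: "B \<in> max_bicliques X Y E"
    and v: "v \<in> X" and adj: "\<forall>y\<in>B \<inter> Y. E v y"
  shows "v \<in> B"
proof -
  have bc: "biclique X Y E B" and mx: "\<And>B'. biclique X Y E B' \<Longrightarrow> B \<subseteq> B' \<Longrightarrow> B' = B"
    using B unfolding max_bicliques_def by auto
  have d: "X \<inter> Y = {}" using bg unfolding bipartite_graph_def by auto
  have "insert v B \<inter> Y = B \<inter> Y" using v d by auto
  hence "biclique X Y E (insert v B)" using bc v adj unfolding biclique_def by auto
  from mx[OF this] show ?thesis by auto
qed

lemma ext_Y:
  assumes bg: "bipartite_graph X Y E" and B: "B \<in> max_bicliques X Y E"
    and v: "v \<in> Y" and adj: "\<forall>x\<in>B \<inter> X. E x v"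
  shows "v \<in> B"
proof -
  have bc: "biclique X Y E B" and mx: "\<And>B'. biclique X Y E B' \<Longrightarrow> B \<subseteq> B' \<Longrightarrow> B' = B"
    using B unfolding max_bicliques_def by auto
  have d: "X \<inter> Y = {}" using bg unfolding bipartite_graph_def by auto
  have "insert v B \<inter> X = B \<inter> X" using v d by auto
  hence "biclique X Y E (insert v B)" using bc v adj unfolding biclique_def by auto
  from mx[OF this] show ?thesis by auto
qed

theorem lemma1:
  fixes X Y :: "'a set" and E :: "'a \<Rightarrow> 'a \<Rightarrow> bool"
  assumes "bipartite_graph X Y E"
    and "domino_free X Y E"
    and "\<forall>v. \<not> universal_vertex X Y E v"
    and "B1 \<in> max_bicliques X Y E" and "B2 \<in> max_bicliques X Y E"
    and "\<not> gle X B1 B2" and "\<not> gle X B2 B1"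
    and "is_meet X Y E M B1 B2" and "is_join X Y E J B1 B2"
  shows "(M \<noteq> gbot X Y \<longrightarrow> J = gtop X Y) \<and> (J \<noteq> gtop X Y \<longrightarrow> M = gbot X Y)"
proof -
  note bg = assms(1)
  have d: "X \<inter> Y = {}" and sym: "\<And>u v. E u v \<Longrightarrow> E v u"
    and side: "\<And>u v. E u v \<Longrightarrow> (u \<in> X \<and> v \<in> Y) \<or> (u \<in> Y \<and> v \<in> X)"
    using bg unfolding bipartite_graph_def by auto
  have bc1: "biclique X Y E B1" and bc2: "biclique X Y E B2"
    using assms(4,5) unfolding max_bicliques_def by auto
  have main: False if Mb: "M \<noteq> gbot X Y" and Jt: "J \<noteq> gtop X Y"
  proof -
    have Mg: "M \<in> galois_lattice X Y E" and M1: "M \<inter> X \<subseteq> B1 \<inter> X" and M2: "M \<inter> X \<subseteq> B2 \<inter> X"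
      using assms(8) unfolding is_meet_def gle_def by auto
    have Jg: "J \<in> galois_lattice X Y E" and J1: "B1 \<inter> X \<subseteq> J \<inter> X" and J2: "B2 \<inter> X \<subseteq> J \<inter> X"
      using assms(9) unfolding is_join_def gle_def by auto
    obtain x where x: "x \<in> X" "x \<in> B1" "x \<in> B2"
    proof (cases "M \<in> max_bicliques X Y E")
      case True
      then have "M \<inter> X \<noteq> {}" unfolding max_bicliques_def biclique_def by auto
      then show ?thesis using M1 M2 that by blast
    next
      case False
      then have "M = X" using Mg Mb unfolding galois_lattice_def gtop_def by auto
      then show ?thesis using M1 M2 assms(6) unfolding gle_def by auto
    qed
    have Jm: "J \<in> max_bicliques X Y E"
    proof (rule ccontr)
      assume "J \<notin> max_bicliques X Y E"
      then have "J = Y" using Jg Jt unfolding galois_lattice_def gbot_def by auto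
      then show False using J1 bc1 d unfolding biclique_def by auto
    qed
    then have bcJ: "biclique X Y E J" unfolding max_bicliques_def by auto
    then obtain y where y: "y \<in> J" "y \<in> Y" unfolding biclique_def by auto
    have yB1: "y \<in> B1"
      by (rule ext_Y[OF bg assms(4) y(2)]) (use J1 bcJ y in \<open>auto simp: biclique_def\<close>)
    have yB2: "y \<in> B2"
      by (rule ext_Y[OF bg assms(5) y(2)]) (use J2 bcJ y in \<open>auto simp: biclique_def\<close>)
    obtain x1 where x1: "x1 \<in> X" "x1 \<in> B1" "x1 \<notin> B2" using assms(6) unfolding gle_def by auto
    obtain x2 where x2: "x2 \<in> X" "x2 \<in> B2" "x2 \<notin> B1" using assms(7) unfolding gle_def by auto
    obtain y1 where y1: "y1 \<in> Y" "y1 \<in> B1" "\<not> E x2 y1"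
      using ext_X[OF bg assms(4) x2(1)] x2(3) by auto
    obtain y2 where y2: "y2 \<in> Y" "y2 \<in> B2" "\<not> E x1 y2"
      using ext_X[OF bg assms(5) x1(1)] x1(3) by auto
    have e: "E x y1" "E x1 y1" "E x1 y" "E x y" "E x2 y" "E x2 y2" "E x y2"
      using bc1 bc2 x x1 x2 y1 y2 yB1 yB2 y unfolding biclique_def by auto
    have es: "E y1 x" "E y1 x1" "E y x1" "E y x" "E y x2" "E y2 x2" "E y2 x"
      using e sym by auto
    have ne: "\<not> E y1 x2" "\<not> E y2 x1" using y1 y2 sym by auto
    have nX: "\<And>u v. u \<in> X \<Longrightarrow> v \<in> X \<Longrightarrow> \<not> E u v"
      and nY: "\<And>u v. u \<in> Y \<Longrightarrow> v \<in> Y \<Longrightarrow> \<not> E u v" using side d by blast+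
    have neq: "x \<noteq> x1" "x \<noteq> x2" "x1 \<noteq> x2" "y \<noteq> y1" "y \<noteq> y2" "y1 \<noteq> y2"
      using x x1 x2 y yB1 yB2 y1 y2 e by auto
    have XY: "\<And>a b. a \<in> X \<Longrightarrow> b \<in> Y \<Longrightarrow> a \<noteq> b" using d by auto
    let ?vs = "[x, y1, x1, y, x2, y2]"
    have "has_induced_domino (X \<union> Y) E"
      unfolding has_induced_domino_def
    proof (intro exI[of _ ?vs] conjI)
      show "length ?vs = 6" by simp
      show "distinct ?vs" using neq XY x x1 x2 y y1 y2 by auto
      show "set ?vs \<subseteq> X \<union> Y" using x x1 x2 y y1 y2 by auto
      show "\<forall>i<6. \<forall>j<6. i \<noteq> j \<longrightarrow> (E (?vs ! i) (?vs ! j) \<longleftrightarrow> {i, j} \<in> domino_edges)"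
        by (rule dom_check) (use e es ne y1(3) y2(3) nX x x1 x2 nY y y1 y2 in auto)
    qed
    then show False using assms(2) unfolding domino_free_def by simp
  qed
  show ?thesis using main by blast
qed

end
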